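(* The all-one vector $\mathbf 1=(1)_{t\in\mathbb F_{3^{2m}}}$ belongs to $\mathcal C_3(\mathbb D_d)$.
   Context: Let $m\ge 2$ be an integer. For $s\in\{m,2m\}$ let $\mathrm{Tr}_s:\mathbb F_{3^s}\to\mathbb F_3$ denote the absolute trace. Vectors in $\mathbb F_3^{3^{2m}}$ are indexed by $\mathbb F_{3^{2m}}$, and a function $f:\mathbb F_{3^{2m}}\to\mathbb F_3$ is identified with $(f(t))_{t\in\mathbb F_{3^{2m}}}$. Let $\mathcal C(2m,3)=\{(\mathrm{Tr}_{2m}(at^{3^m+1}+bt)+h)_{t\in\mathbb F_{3^{2m}}}: a\in\mathbb F_{3^m}, b\in\mathbb F_{3^{2m}}, h\in\mathbb F_3\}$, let $d$ be its minimum nonzero Hamming weight, let $\mathbb D_d$ be the incidence structure on $\mathbb F_{3^{2m}}$ whose blocks are the supports of the weight-$d$ codewords, and let $\mathcal C_3(\mathbb D_d)$ be the $\mathbb F_3$-span of the incidence vectors of the blocks (entry $1$ on the block, $0$ elsewhere). *)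

theory Defs
  imports Main
begin

text \<open>The ambient field F_{3^{2m}} is a finite field type 'a with CARD('a) = 3^(2m).
Vectors in F_3^{3^{2m}} indexed by F_{3^{2m}} are functions 'a => 'a with values in F_3.\<close>

definition abs_trace :: "nat \<Rightarrow> 'a::field \<Rightarrow> 'a" where
  "abs_trace s x = (\<Sum>i<s. x ^ (3 ^ i))"

definition prime_subfield3 :: "'a::field set" where
  "prime_subfield3 = {x. x ^ 3 = x}"

definition subfield3 :: "nat \<Rightarrow> 'a::field set" where
  "subfield3 s = {x. x ^ (3 ^ s) = x}"

definition code_C :: "nat \<Rightarrow> ('a::field \<Rightarrow> 'a) set" where
  "code_C m = {(\<lambda>t. abs_trace (2*m) (a * t ^ (3^m + 1) + b * t) + h) | a b h.
                 a \<in> subfield3 m \<and> h \<in> prime_subfield3}"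

definition hweight :: "('a::finite \<Rightarrow> 'b::zero) \<Rightarrow> nat" where
  "hweight c = card {t. c t \<noteq> 0}"

definition min_weight :: "('a::finite \<Rightarrow> 'b::zero) set \<Rightarrow> nat" where
  "min_weight C = Min {hweight c | c. c \<in> C \<and> c \<noteq> (\<lambda>_. 0)}"

definition design_blocks :: "('a::finite \<Rightarrow> 'b::zero) set \<Rightarrow> nat \<Rightarrow> 'a set set" where
  "design_blocks C d = {{t. c t \<noteq> 0} | c. c \<in> C \<and> hweight c = d}"

definition span_F3_incidence :: "('a::{finite} set) set \<Rightarrow> ('a \<Rightarrow> 'b::field) set" where
  "span_F3_incidence Bs =
     {(\<lambda>t. \<Sum>B\<in>Bs. coef B * (if t \<in> B then 1 else 0)) | coef.
        \<forall>B\<in>Bs. coef B \<in> prime_subfield3}"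

end

theory Submission
  imports Defs "HOL-Number_Theory.Residues"
begin


lemma pow_card_same:
  fixes x :: "'a::{field,finite}"
  shows "x ^ card (UNIV :: 'a set) = x"
proof (cases "x = 0")
  case False
  have "x * (\<Prod>y\<in>UNIV-{0}. x * y) = x * x ^ (card (UNIV :: 'a set) - 1) * \<Prod>(UNIV-{0})"
    by (simp add: prod.distrib mult_ac)
  also have "x * x ^ (card (UNIV :: 'a set) - 1) = x ^ Suc (card (UNIV :: 'a set) - 1)"
    by (subst power_Suc) auto
  also have "Suc (card (UNIV :: 'a set) - 1) = card (UNIV :: 'a set)"
    using finite_UNIV_card_ge_0[where ?'a = 'a] by simp
  also have "(\<Prod>y\<in>UNIV-{0}. x * y) = (\<Prod>y\<in>UNIV-{0}. y)"
    by (rule prod.reindex_bij_witness[of _ "\<lambda>y. y / x" "\<lambda>y. x * y"]) (use False in auto)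
  finally show ?thesis
    by simp
qed (use finite_UNIV_card_ge_0[where ?'a = 'a] in auto)

lemma char3:
  assumes "card (UNIV :: 'a::{field,finite} set) = 3 ^ n" "n > 0"
  shows "(3::'a) = 0"
proof -
  have pos: "CHAR('a) > 0" by (rule finite_imp_CHAR_pos) simp
  have pr: "prime CHAR('a)" using prime_CHAR_semidom[OF pos] .
  have "CHAR('a) dvd 3 ^ n" using CHAR_dvd_CARD[where 'a='a] assms(1) by simp
  hence "CHAR('a) dvd 3" using pr prime_dvd_power by blast
  hence "CHAR('a) = 3" using pr primes_dvd_imp_eq[of "CHAR('a)" 3] by simp
  hence "of_nat 3 = (0::'a)" by (metis of_nat_CHAR)
  thus ?thesis by simp
qed

lemma frob3:
  fixes x y :: "'a::comm_ring_1"
  assumes "(3::'a) = 0"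
  shows "(x+y)^3 = x^3+y^3"
proof -
  have "(x+y)^3 = x^3+y^3 + 3*(x^2*y + x*y^2)" by (simp add: power3_eq_cube power2_eq_square algebra_simps)
  thus ?thesis using assms by simp
qed

lemma frob3_pow:
  fixes x y :: "'a::comm_ring_1"
  assumes "(3::'a) = 0"
  shows "(x+y)^(3^k) = x^(3^k)+y^(3^k)"
proof (induction k)
  case (Suc k)
  have "(x+y)^(3^Suc k) = ((x+y)^(3^k))^3" by (simp add: power_mult[symmetric] mult.commute)
  also have "\<dots> = (x^(3^k))^3 + (y^(3^k))^3" using Suc frob3[OF assms] by simp
  also have "\<dots> = x^(3^Suc k)+y^(3^Suc k)" by (simp add: power_mult[symmetric] mult.commute)
  finally show ?case .
qed simp

lemma frob_sum:
  fixes f :: "'b \<Rightarrow> 'a::comm_ring_1"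
  assumes "(3::'a) = 0"
  shows "(\<Sum>i\<in>A. f i)^3 = (\<Sum>i\<in>A. (f i)^3)"
  by (induction A rule: infinite_finite_induct) (simp_all add: frob3[OF assms])

lemma tr_add:
  fixes x y :: "'a::field"
  assumes "(3::'a) = 0"
  shows "abs_trace s (x+y) = abs_trace s x + abs_trace s y"
  unfolding abs_trace_def by (simp add: frob3_pow[OF assms] sum.distrib)

lemma tr_cube:
  fixes x :: "'a::field"
  assumes "x^(3^s) = x"
  shows "abs_trace s (x^3) = abs_trace s x"
proof -
  have "abs_trace s (x^3) = (\<Sum>i<s. x^(3^Suc i))"
    unfolding abs_trace_def by (simp add: power_mult[symmetric] mult.commute)
  also have "\<dots> + x^(3^0) = (\<Sum>i<Suc s. x^(3^i))" by (subst sum.lessThan_Suc_shift) simp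
  also have "\<dots> = abs_trace s x + x^(3^s)" unfolding abs_trace_def by simp
  finally show ?thesis using assms by simp
qed

lemma tr_pow:
  fixes x :: "'a::field"
  assumes "\<And>y::'a. y^(3^s) = y"
  shows "abs_trace s (x^(3^k)) = abs_trace s x"
proof (induction k)
  case (Suc k)
  have "x^(3^Suc k) = (x^(3^k))^3" by (simp add: power_mult[symmetric] mult.commute)
  thus ?case using tr_cube[OF assms] Suc by simp
qed simp

lemma tr_F3:
  fixes x :: "'a::field"
  assumes "(3::'a) = 0" "x^(3^s) = x"
  shows "abs_trace s x \<in> prime_subfield3"
proof -
  have "abs_trace s x ^ 3 = abs_trace s (x^3)"
    unfolding abs_trace_def by (simp add: frob_sum[OF assms(1)] power_mult[symmetric] mult.commute)
  thus ?thesis using tr_cube[OF assms(2)] by (simp add: prime_subfield3_def)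
qed

lemma F3_add: "(3::'a::field) = 0 \<Longrightarrow> (x::'a) \<in> prime_subfield3 \<Longrightarrow> y \<in> prime_subfield3 \<Longrightarrow> x + y \<in> prime_subfield3"
  unfolding prime_subfield3_def using frob3[of x y] by simp
lemma F3_mult: "x \<in> prime_subfield3 \<Longrightarrow> y \<in> prime_subfield3 \<Longrightarrow> x * (y::'a::field) \<in> prime_subfield3"
  by (simp add: prime_subfield3_def power_mult_distrib)
lemma F3_uminus: "x \<in> prime_subfield3 \<Longrightarrow> - (x::'a::field) \<in> prime_subfield3"
  by (simp add: prime_subfield3_def)
lemma F3_diff: "(3::'a::field) = 0 \<Longrightarrow> (x::'a) \<in> prime_subfield3 \<Longrightarrow> y \<in> prime_subfield3 \<Longrightarrow> x - y \<in> prime_subfield3"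
  using F3_add[of x "-y"] F3_uminus[of y] by simp
lemma F3_0: "0 \<in> prime_subfield3" by (simp add: prime_subfield3_def)
lemma F3_1: "1 \<in> prime_subfield3" by (simp add: prime_subfield3_def)
lemma F3_sum: "(3::'a::field) = 0 \<Longrightarrow> (\<And>i. i \<in> A \<Longrightarrow> f i \<in> prime_subfield3) \<Longrightarrow> (\<Sum>i\<in>A. f i :: 'a) \<in> prime_subfield3"
  by (induction A rule: infinite_finite_induct) (auto simp: F3_0 F3_add)



lemma code_shift:
  fixes c :: "'a::{field,finite} \<Rightarrow> 'a"
  assumes three: "(3::'a) = 0" and fr: "\<And>x::'a. x^(3^(2*m)) = x"
    and c: "c \<in> code_C m"
  shows "(\<lambda>t. c (t+s)) \<in> code_C m"
proof -
  obtain a b h where cdef: "c = (\<lambda>t. abs_trace (2*m) (a * t ^ (3^m + 1) + b * t) + h)"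
    and a: "a \<in> subfield3 m" and h: "h \<in> prime_subfield3"
    using c unfolding code_C_def by blast
  define q where "q = (3::nat)^m"
  have qq: "\<And>x::'a. (x^q)^q = x"
  proof -
    fix x :: 'a
    have "(x^q)^q = x^(3^(2*m))" by (simp add: q_def power_mult[symmetric] power_add[symmetric] mult_2)
    thus "(x^q)^q = x" using fr by simp
  qed
  let ?T = "abs_trace (2*m)"
  have tradd: "\<And>x y::'a. ?T (x+y) = ?T x + ?T y" using tr_add[OF three] by blast
  have trq: "\<And>x::'a. ?T (x^q) = ?T x" unfolding q_def by (rule tr_pow[OF fr])
  define b' where "b' = (a*s)^q + a*s^q + b"
  define h' where "h' = ?T (a*s^(q+1) + b*s) + h"
  have "h' \<in> prime_subfield3"
    unfolding h'_def by (intro F3_add[OF three] h tr_F3[OF three fr])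
  moreover have "(\<lambda>t. c (t+s)) = (\<lambda>t. ?T (a * t ^ (3^m + 1) + b' * t) + h')"
  proof
    fix t
    have pw: "(t+s)^(q+1) = (t^q + s^q)*(t+s)"
      using frob3_pow[OF three, of t s m] by (simp add: q_def)
    have e1: "((a*s)^q*t)^q = a*s*t^q"
      by (simp add: power_mult_distrib qq)
    have "a*(t+s)^(q+1) + b*(t+s) = (a*t^(q+1) + b*t + a*s^q*t) + (a*s*t^q) + (a*s^(q+1)+b*s)"
      unfolding pw by (simp add: algebra_simps power_add)
    hence "?T (a*(t+s)^(q+1) + b*(t+s)) = ?T (a*t^(q+1) + b*t + a*s^q*t) + ?T (((a*s)^q*t)^q) + ?T (a*s^(q+1)+b*s)"
      by (simp add: tradd e1)
    also have "\<dots> = ?T (a*t^(q+1) + b'*t) + ?T (a*s^(q+1)+b*s)"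
    proof -
      have "?T (((a*s)^q*t)^q) = ?T ((a*s)^q*t)" by (rule trq)
      moreover have "?T (a*t^(q+1) + b*t + a*s^q*t) + ?T ((a*s)^q*t) = ?T (a*t^(q+1) + b*t + a*s^q*t + (a*s)^q*t)"
        by (rule tradd[symmetric])
      moreover have "a*t^(q+1) + b*t + a*s^q*t + (a*s)^q*t = a*t^(q+1) + b'*t"
        by (simp add: b'_def algebra_simps)
      ultimately show ?thesis by (simp only:)
    qed
    finally show "c (t+s) = ?T (a * t ^ (3^m + 1) + b' * t) + h'"
      by (simp add: cdef h'_def q_def)
  qed
  ultimately show ?thesis using a unfolding code_C_def by blast
qed



lemma ifmul: "(if P then 1 else 0) * x = (if P then x else (0::'a::semiring_1))" by simp

definition TS :: "('a::{field,finite} \<Rightarrow> 'a) \<Rightarrow> ('a \<Rightarrow> 'a) set" where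
  "TS g = {f. \<exists>coef. (\<forall>s. coef s \<in> prime_subfield3) \<and> f = (\<lambda>t. \<Sum>s\<in>UNIV. coef s * g (t+s))}"

definition Dl :: "'a::{field,finite} \<Rightarrow> ('a \<Rightarrow> 'a) \<Rightarrow> ('a \<Rightarrow> 'a)" where
  "Dl s f = (\<lambda>t. f (t+s) - f t)"

lemma TS_self: "g \<in> TS g"
proof -
  have "g = (\<lambda>t. \<Sum>s\<in>UNIV. (if s = 0 then 1 else 0) * g (t+s))"
    by (simp only: ifmul) simp
  thus ?thesis unfolding TS_def using F3_0 F3_1 by (intro CollectI exI[of _ "\<lambda>s. if s = 0 then 1 else 0"]) auto
qed

lemma TS_trans:
  assumes three: "(3::'a::{field,finite}) = 0" and f: "f \<in> TS (g::'a\<Rightarrow>'a)"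
  shows "TS f \<subseteq> TS g"
proof
  fix \<phi> assume "\<phi> \<in> TS f"
  then obtain c where c: "\<forall>s. c s \<in> prime_subfield3" and phi: "\<phi> = (\<lambda>t. \<Sum>s\<in>UNIV. c s * f (t+s))"
    unfolding TS_def by blast
  obtain d where d: "\<forall>s. d s \<in> prime_subfield3" and fd: "f = (\<lambda>t. \<Sum>s\<in>UNIV. d s * g (t+s))"
    using f unfolding TS_def by blast
  define e where "e = (\<lambda>w. \<Sum>s\<in>UNIV. c s * d (w - s))"
  have e: "\<forall>w. e w \<in> prime_subfield3"
    unfolding e_def by (intro allI, rule F3_sum[OF three], rule F3_mult) (use c d in auto)
  have "\<phi> = (\<lambda>t. \<Sum>w\<in>UNIV. e w * g (t+w))"
  proof
    fix t
    have "\<phi> t = (\<Sum>s\<in>UNIV. \<Sum>u\<in>UNIV. c s * (d u * g (t+s+u)))"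
      by (simp add: phi fd sum_distrib_left)
    also have "\<dots> = (\<Sum>s\<in>UNIV. \<Sum>w\<in>UNIV. c s * (d (w - s) * g (t+w)))"
    proof (rule sum.cong[OF refl])
      fix s
      show "(\<Sum>u\<in>UNIV. c s * (d u * g (t+s+u))) = (\<Sum>w\<in>UNIV. c s * (d (w - s) * g (t+w)))"
        by (rule sum.reindex_bij_witness[of _ "\<lambda>w. w - s" "\<lambda>u. u + s"]) (auto simp: algebra_simps)
    qed
    also have "\<dots> = (\<Sum>w\<in>UNIV. \<Sum>s\<in>UNIV. c s * (d (w - s) * g (t+w)))"
      by (rule sum.swap)
    also have "\<dots> = (\<Sum>w\<in>UNIV. e w * g (t+w))"
      by (simp add: e_def sum_distrib_right mult.assoc)
    finally show "\<phi> t = (\<Sum>w\<in>UNIV. e w * g (t+w))" .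
  qed
  thus "\<phi> \<in> TS g" unfolding TS_def using e by blast
qed

lemma TS_Dl:
  assumes "\<phi> \<in> TS (Dl s f)"
  shows "\<exists>\<psi>\<in>TS f. \<phi> = Dl s \<psi>"
proof -
  obtain c where c: "\<forall>u. c u \<in> prime_subfield3" and phi: "\<phi> = (\<lambda>t. \<Sum>u\<in>UNIV. c u * Dl s f (t+u))"
    using assms unfolding TS_def by blast
  define \<psi> where "\<psi> = (\<lambda>t. \<Sum>u\<in>UNIV. c u * f (t+u))"
  have "\<psi> \<in> TS f" unfolding TS_def \<psi>_def using c by blast
  moreover have "\<phi> = Dl s \<psi>"
    unfolding phi Dl_def \<psi>_def by (rule ext) (simp add: algebra_simps sum_subtractf[symmetric])
  ultimately show ?thesis by blast
qed

lemma TS_Dl_mem: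
  assumes three: "(3::'a::{field,finite}) = 0"
  shows "Dl s f \<in> TS (f::'a \<Rightarrow> 'a)"
proof -
  define c where "c = (\<lambda>u::'a. (if u = s then 1 else 0) - (if u = 0 then (1::'a) else 0))"
  have "\<forall>u. c u \<in> prime_subfield3"
    unfolding c_def using F3_0 F3_1 F3_diff[OF three] F3_uminus[OF F3_1] by auto
  moreover have "Dl s f = (\<lambda>t. \<Sum>u\<in>UNIV. c u * f (t+u))"
    unfolding Dl_def c_def by (rule ext) (simp only: left_diff_distrib ifmul sum_subtractf, simp)
  ultimately show ?thesis unfolding TS_def by blast
qed

lemma Dl3:
  assumes three: "(3::'a::{field,finite}) = 0"
  shows "Dl s (Dl s (Dl s (\<psi>::'a\<Rightarrow>'a))) = (\<lambda>_. (0::'a))"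
proof
  fix t
  have "s + s + s = 3 * s" by (simp add: algebra_simps)
  hence sss: "s + s + s = 0" using three by simp
  have "Dl s (Dl s (Dl s \<psi>)) t = \<psi> (t+s+s+s) - 3 * \<psi> (t+s+s) + 3 * \<psi> (t+s) - \<psi> t"
    unfolding Dl_def by (simp add: algebra_simps)
  also have "t+s+s+s = t" using sss by (simp add: add.assoc)
  finally show "Dl s (Dl s (Dl s \<psi>)) t = 0" using three by simp
qed

lemma TS_F3:
  assumes three: "(3::'a::{field,finite}) = 0" and g: "\<forall>t. (g::'a\<Rightarrow>'a) t \<in> prime_subfield3"
    and f: "f \<in> TS g"
  shows "f t \<in> prime_subfield3"
proof -
  obtain c where c: "\<forall>u. c u \<in> prime_subfield3" and fc: "f = (\<lambda>t. \<Sum>u\<in>UNIV. c u * g (t+u))"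
    using f unfolding TS_def by blast
  show ?thesis unfolding fc by (rule F3_sum[OF three], rule F3_mult) (use c g in auto)
qed

lemma TS_scale:
  assumes "k \<in> prime_subfield3" "f \<in> TS g"
  shows "(\<lambda>t. k * f t) \<in> TS g"
proof -
  obtain c where c: "\<forall>u. c u \<in> prime_subfield3" and f: "f = (\<lambda>t. \<Sum>u\<in>UNIV. c u * g (t+u))"
    using assms unfolding TS_def by blast
  have "\<forall>u. k * c u \<in> prime_subfield3" using c assms(1) F3_mult by blast
  moreover have "(\<lambda>t. k * f t) = (\<lambda>t. \<Sum>u\<in>UNIV. (k * c u) * g (t+u))"
    by (simp add: f sum_distrib_left mult.assoc)
  ultimately show ?thesis unfolding TS_def by (intro CollectI exI[of _ "\<lambda>u. k * c u"]) auto
qed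

lemma TS_const:
  assumes three: "(3::'a::{field,finite}) = 0" and g: "\<forall>t. (g::'a\<Rightarrow>'a) t \<in> prime_subfield3"
    and gnz: "g \<noteq> (\<lambda>_. 0)"
  shows "(\<lambda>_. 1) \<in> TS g"
proof -
  let ?P = "\<lambda>f. f \<in> TS g \<and> f \<noteq> (\<lambda>_. 0)"
  have "?P g" using TS_self gnz by blast
  then obtain f0 where P0: "?P f0" and min: "\<And>f. ?P f \<Longrightarrow> card (TS f0) \<le> card (TS f)"
    using ex_has_least_nat[of ?P g "\<lambda>f. card (TS f)"] by blast
  have inv: "Dl s f0 = (\<lambda>_. 0)" for s
  proof (rule ccontr)
    assume hnz: "Dl s f0 \<noteq> (\<lambda>_. 0)"
    let ?h = "Dl s f0"
    have hf0: "?h \<in> TS f0" by (rule TS_Dl_mem[OF three])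
    have sub: "TS ?h \<subseteq> TS f0" by (rule TS_trans[OF three hf0])
    have "?P ?h" using hnz TS_trans[OF three] P0 hf0 by blast
    hence "card (TS f0) \<le> card (TS ?h)" by (rule min)
    moreover have "card (TS ?h) \<le> card (TS f0)" by (rule card_mono[OF _ sub]) simp
    ultimately have eq: "TS ?h = TS f0" using sub by (intro card_subset_eq) auto
    have "f0 \<in> TS ?h" using eq TS_self by blast
    then obtain p1 where p1: "p1 \<in> TS f0" "f0 = Dl s p1" using TS_Dl by blast
    then obtain p2 where p2: "p2 \<in> TS f0" "p1 = Dl s p2" using TS_Dl eq by blast
    then obtain p3 where p3: "p3 \<in> TS f0" "p2 = Dl s p3" using TS_Dl eq by blast
    have "f0 = (\<lambda>_. 0)" using p1 p2 p3 Dl3[OF three] by simp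
    thus False using P0 by blast
  qed
  define \<kappa> where "\<kappa> = f0 0"
  have const: "f0 = (\<lambda>_. \<kappa>)"
  proof
    fix t
    have "f0 (0 + t) - f0 0 = 0" using inv[of t] unfolding Dl_def by (metis)
    thus "f0 t = \<kappa>" unfolding \<kappa>_def by simp
  qed
  have knz: "\<kappa> \<noteq> 0" using P0 const by auto
  have kF: "\<kappa> \<in> prime_subfield3" using TS_F3[OF three g] P0 const by metis
  hence "\<kappa>^3 = \<kappa>" by (simp add: prime_subfield3_def)
  hence kk: "\<kappa> * \<kappa> = 1" using knz by (simp add: power3_eq_cube)
  have "(\<lambda>t. \<kappa> * f0 t) \<in> TS g" using TS_scale kF P0 by blast
  thus ?thesis using const kk by simp
qed



theorem lemma3p4:
  fixes m :: nat
  assumes "m \<ge> 2"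
    and "card (UNIV :: 'a::{field,finite} set) = 3 ^ (2*m)"
  shows "(\<lambda>_. (1::'a)) \<in>
           span_F3_incidence (design_blocks (code_C m :: ('a \<Rightarrow> 'a) set)
                                            (min_weight (code_C m :: ('a \<Rightarrow> 'a) set)))"
proof -
  have three: "(3::'a) = 0" using char3[OF assms(2)] assms(1) by simp
  have fr: "\<And>x::'a. x^(3^(2*m)) = x"
  proof -
    fix x :: 'a
    show "x^(3^(2*m)) = x" using pow_card_same[of x] assms(2) by simp
  qed
  define C where "C = (code_C m :: ('a \<Rightarrow> 'a) set)"
  define W where "W = {hweight c |c. c \<in> C \<and> c \<noteq> (\<lambda>_. 0)}"
  have one: "(\<lambda>_. (1::'a)) \<in> C"
  proof -
    have tr0: "abs_trace (2*m) (0::'a) = 0" unfolding abs_trace_def by (simp add: power_0_left)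
    have "(\<lambda>_. (1::'a)) = (\<lambda>t. abs_trace (2*m) (0 * t ^ (3^m + 1) + 0 * t) + 1)"
      using tr0 by simp
    moreover have "(0::'a) \<in> subfield3 m" by (simp add: subfield3_def)
    ultimately show ?thesis unfolding C_def code_C_def using F3_1 by blast
  qed
  have "W = hweight ` {c. c \<in> C \<and> c \<noteq> (\<lambda>_. 0)}" unfolding W_def by blast
  hence finW: "finite W" by simp
  have onz: "(\<lambda>_. (1::'a)) \<noteq> (\<lambda>_. 0)"
  proof
    assume "(\<lambda>_. (1::'a)) = (\<lambda>_. 0)"
    hence "(\<lambda>_. (1::'a)) 0 = (\<lambda>_. 0) (0::'a)" by (rule fun_cong)
    thus False by simp
  qed
  have "hweight (\<lambda>_::'a. (1::'a)) \<in> W" unfolding W_def using one onz by blast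
  hence "W \<noteq> {}" by blast
  define d where "d = Min W"
  have "d \<in> W" unfolding d_def using finW \<open>W \<noteq> {}\<close> by (rule Min_in)
  then obtain c0 where c0: "c0 \<in> C" "c0 \<noteq> (\<lambda>_. 0)" "hweight c0 = d"
    unfolding W_def by blast
  have dmin: "min_weight C = d" unfolding min_weight_def d_def W_def by (rule refl)
  define g where "g = (\<lambda>t. if c0 t \<noteq> 0 then (1::'a) else 0)"
  have gF: "\<forall>t. g t \<in> prime_subfield3" unfolding g_def using F3_0 F3_1 by auto
  have gnz: "g \<noteq> (\<lambda>_. 0)"
  proof
    assume "g = (\<lambda>_. 0)"
    hence "\<And>t. g t = 0" by simp
    hence "\<forall>t. c0 t = 0" unfolding g_def by (metis zero_neq_one)
    thus False using c0(2) by auto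
  qed
  obtain coef where coef: "\<forall>s. coef s \<in> prime_subfield3"
    and one_eq: "(\<lambda>_. (1::'a)) = (\<lambda>t. \<Sum>s\<in>UNIV. coef s * g (t+s))"
    using TS_const[OF three gF gnz] unfolding TS_def by blast
  define Bs where "Bs = design_blocks C d"
  define Bf where "Bf = (\<lambda>s. {t. c0 (t+s) \<noteq> 0})"
  have BfBs: "Bf s \<in> Bs" for s
  proof -
    have shc: "(\<lambda>t. c0 (t+s)) \<in> C" using code_shift[OF three fr] c0(1) unfolding C_def by blast
    have "bij_betw (\<lambda>t. t + s) {t. c0 (t+s) \<noteq> 0} {t. c0 t \<noteq> 0}"
      by (rule bij_betwI[where g="\<lambda>t. t - s"]) auto
    hence "card {t. c0 (t+s) \<noteq> 0} = card {t. c0 t \<noteq> 0}"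
      by (rule bij_betw_same_card)
    hence "hweight (\<lambda>t. c0 (t+s)) = d" using c0(3) unfolding hweight_def by simp
    thus ?thesis unfolding Bs_def design_blocks_def Bf_def
      by (intro CollectI exI[of _ "\<lambda>t. c0 (t+s)"]) (simp add: shc)
  qed
  define cB where "cB = (\<lambda>B. \<Sum>s\<in>{s. s \<in> UNIV \<and> Bf s = B}. coef s)"
  have cBF: "\<forall>B\<in>Bs. cB B \<in> prime_subfield3"
  proof
    fix B
    show "cB B \<in> prime_subfield3" unfolding cB_def by (rule F3_sum[OF three]) (use coef in auto)
  qed
  have "(\<lambda>_. (1::'a)) = (\<lambda>t. \<Sum>B\<in>Bs. cB B * (if t \<in> B then 1 else 0))"
  proof
    fix t
    have "(\<Sum>B\<in>Bs. cB B * (if t \<in> B then 1 else 0))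
        = (\<Sum>B\<in>Bs. \<Sum>s\<in>{s. s \<in> UNIV \<and> Bf s = B}. coef s * (if t \<in> Bf s then 1 else 0))"
      unfolding cB_def sum_distrib_right by (intro sum.cong refl) auto
    also have "\<dots> = (\<Sum>s\<in>UNIV. coef s * (if t \<in> Bf s then 1 else 0))"
      by (rule sum.group) (auto simp: BfBs)
    also have "\<dots> = (\<Sum>s\<in>UNIV. coef s * g (t+s))"
      unfolding Bf_def g_def by simp
    finally show "1 = (\<Sum>B\<in>Bs. cB B * (if t \<in> B then 1 else 0))"
      using fun_cong[OF one_eq, of t] by simp
  qed
  hence "(\<lambda>_. (1::'a)) \<in> span_F3_incidence Bs"
    unfolding span_F3_incidence_def using cBF by (intro CollectI exI[of _ cB] conjI) auto
  thus ?thesis unfolding Bs_def C_def[symmetric] dmin[symmetric] .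
qed


end
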